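(* For every integer $n\ge 0$, $$\ell_n=(-1)^{n-1}\int_1^{+\infty}\frac{\{x\}}{x^2}L_n(\log x)\,\mathrm{d}x .$$
   Context: $\{x\}=x-\lfloor x\rfloor$ is the fractional part. $L_n(u)=\sum_{k=0}^n\binom{n}{k}\frac{(-1)^k}{k!}u^k$ are the Laguerre polynomials. The Stieltjes constants are $\gamma_n=\lim_{N\to\infty}\left(\sum_{k=1}^N\frac{\log^n k}{k}-\frac{\log^{n+1}N}{n+1}\right)$. The coefficients $\ell_n$ are defined by $\ell_0=\gamma_0-1$ and $\ell_n=\sum_{k=1}^n\binom{n-1}{k-1}\frac{(-1)^{n-k}}{k!}\gamma_k$ for $n\ge1$. *)

theory Defs
  imports "HOL-Analysis.Analysis"
begin

definition frac_part :: "real \<Rightarrow> real" where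
  "frac_part x = x - of_int \<lfloor>x\<rfloor>"

definition laguerre :: "nat \<Rightarrow> real \<Rightarrow> real" where
  "laguerre n u = (\<Sum>k=0..n. real (n choose k) * (-1) ^ k / fact k * u ^ k)"

definition stieltjes :: "nat \<Rightarrow> real" where
  "stieltjes n = lim (\<lambda>N. (\<Sum>k=1..N. ln (real k) ^ n / real k) - ln (real N) ^ (n + 1) / real (n + 1))"

definition ell :: "nat \<Rightarrow> real" where
  "ell n = (if n = 0 then stieltjes 0 - 1
            else (\<Sum>k=1..n. real ((n - 1) choose (k - 1)) * (-1) ^ (n - k) / fact k * stieltjes k))"

end

theory Submission
  imports Defs
begin
definition gg :: "nat \<Rightarrow> real \<Rightarrow> real" where
  "gg m x = frac_part x * ((real m * ln x ^ (m - 1) - ln x ^ m) / x\<^sup>2)"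

lemma deriv_h:
  fixes m :: nat and N x :: real
  assumes "x > 0"
  shows "((\<lambda>x. (x - N) * (ln x ^ m / x) - ln x ^ (m + 1) / real (m + 1)) has_real_derivative
          (x - N) * ((real m * ln x ^ (m - 1) - ln x ^ m) / x\<^sup>2)) (at x)"
  using assms
  apply (intro derivative_eq_intros refl)
  apply (auto simp: power2_eq_square mult_ac)
  done

lemma stepA:
  fixes m N :: nat
  assumes "N \<ge> 1"
  shows "(gg m has_integral (ln (real (Suc N))^m/real (Suc N) - (ln (real (Suc N))^(m+1) - ln (real N)^(m+1))/real (m+1))) {real N..real (Suc N)}"
proof -
  define h where "h = (\<lambda>x. (x - real N) * (ln x ^ m / x) - ln x ^ (m + 1) / real (m + 1))"
  have FTC: "((\<lambda>x. (x - real N) * ((real m * ln x ^ (m - 1) - ln x ^ m) / x\<^sup>2)) has_integral (h (real (Suc N)) - h (real N))) {real N..real (Suc N)}"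
  proof (rule fundamental_theorem_of_calculus)
    fix x assume "x \<in> {real N..real (Suc N)}"
    then have "x > 0" using assms by auto
    then show "(h has_vector_derivative (x - real N) * ((real m * ln x ^ (m - 1) - ln x ^ m) / x\<^sup>2)) (at x within {real N..real (Suc N)})"
      unfolding h_def using deriv_h[of x "real N" m]
      by (simp add: has_real_derivative_iff_has_vector_derivative has_vector_derivative_at_within)
  qed simp
  have "(gg m has_integral (h (real (Suc N)) - h (real N))) {real N..real (Suc N)}"
  proof (rule has_integral_spike_finite[of "{real (Suc N)}", OF _ _ FTC])
    fix x assume "x \<in> {real N..real (Suc N)} - {real (Suc N)}"
    then have "\<lfloor>x\<rfloor> = int N" by (simp add: floor_eq_iff)
    then show "gg m x = (x - real N) * ((real m * ln x ^ (m - 1) - ln x ^ m) / x\<^sup>2)"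
      by (simp add: gg_def frac_part_def)
  qed simp
  moreover have "h (real (Suc N)) - h (real N) = ln (real (Suc N))^m/real (Suc N) - (ln (real (Suc N))^(m+1) - ln (real N)^(m+1))/real (m+1)"
    unfolding h_def by (simp add: diff_divide_distrib)
  ultimately show ?thesis by simp
qed

lemma lemB:
  fixes m N :: nat
  assumes "N \<ge> 1"
  shows "(gg m has_integral ((\<Sum>k=1..N. ln (real k) ^ m / real k) - ln (real N) ^ (m + 1) / real (m + 1) - (if m = 0 then 1 else 0))) {1..real N}"
  using assms
proof (induction N rule: nat_induct_at_least)
  case base
  show ?case using has_integral_refl(2)[of "gg m" 1] by (simp add: power_0_left)
next
  case (Suc n)
  have X: "(gg m has_integral ((\<Sum>k=1..n. ln (real k) ^ m / real k) - ln (real n) ^ (m + 1) / real (m + 1) - (if m = 0 then 1 else 0)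
     + (ln (real (Suc n))^m/real (Suc n) - (ln (real (Suc n))^(m+1) - ln (real n)^(m+1))/real (m+1)))) {1..real (Suc n)}"
    by (rule has_integral_combine[OF _ _ Suc.IH stepA[OF Suc.hyps]]) (use Suc.hyps in auto)
  have eq: "(\<Sum>k=1..n. ln (real k) ^ m / real k) - ln (real n) ^ (m + 1) / real (m + 1) - (if m = 0 then 1 else 0)
     + (ln (real (Suc n))^m/real (Suc n) - (ln (real (Suc n))^(m+1) - ln (real n)^(m+1))/real (m+1))
     = (\<Sum>k=1..Suc n. ln (real k) ^ m / real k) - ln (real (Suc n)) ^ (m + 1) / real (m + 1) - (if m = 0 then 1 else 0)"
    using Suc.hyps by (simp only: sum.cl_ivl_Suc) (simp add: diff_divide_distrib)
  show ?case using X unfolding eq .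
qed
lemma ln_pow_bound:
  fixes x :: real and k :: nat
  assumes x: "x \<ge> 1"
  shows "ln x ^ k \<le> (2 * real k) ^ k * x powr (1/2)"
proof (cases "k = 0")
  case True
  then show ?thesis using ge_one_powr_ge_zero[OF x, of "1/2"] by simp
next
  case False
  define y where "y = x powr (1 / (2 * real k))"
  have ypos: "y > 0" using x by (simp add: y_def)
  have "ln y = ln x / (2 * real k)" using x by (simp add: y_def)
  then have "ln x = 2 * real k * ln y" using False by simp
  also have "\<dots> \<le> 2 * real k * y" using ln_le_minus_one[OF ypos] by (intro mult_left_mono) auto
  finally have "ln x \<le> 2 * real k * y" .
  moreover have "0 \<le> ln x" using x by simp
  ultimately have "ln x ^ k \<le> (2 * real k * y) ^ k" by (rule power_mono)
  also have "\<dots> = (2 * real k) ^ k * y ^ k" by (simp add: power_mult_distrib)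
  also have "y ^ k = x powr (1/2)"
    unfolding y_def using x False by (simp add: powr_power)
  finally show ?thesis .
qed

definition KK :: "nat \<Rightarrow> real" where
  "KK m = real m * (2 * real (m - 1)) ^ (m - 1) + (2 * real m) ^ m"

lemma frac_part_bounds: "0 \<le> frac_part x" "frac_part x \<le> 1"
  unfolding frac_part_def using floor_correct[of x] by linarith+

lemma gg_bound:
  assumes x: "x \<ge> 1"
  shows "\<bar>gg m x\<bar> \<le> KK m * x powr (-3/2)"
proof -
  have l0: "0 \<le> ln x" using x by simp
  have "\<bar>real m * ln x ^ (m - 1) - ln x ^ m\<bar> \<le> real m * ln x ^ (m - 1) + ln x ^ m"
    using l0 by (simp add: abs_le_iff)
  also have "\<dots> \<le> real m * ((2 * real (m - 1)) ^ (m - 1) * x powr (1/2)) + (2 * real m) ^ m * x powr (1/2)"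
    by (intro add_mono mult_left_mono ln_pow_bound x) auto
  also have "\<dots> = KK m * x powr (1/2)" by (simp add: KK_def algebra_simps)
  finally have A: "\<bar>real m * ln x ^ (m - 1) - ln x ^ m\<bar> \<le> KK m * x powr (1/2)" .
  have "\<bar>gg m x\<bar> = \<bar>frac_part x\<bar> * \<bar>real m * ln x ^ (m - 1) - ln x ^ m\<bar> / x\<^sup>2"
    by (simp add: gg_def abs_mult)
  also have "\<dots> \<le> 1 * (KK m * x powr (1/2)) / x\<^sup>2"
  proof (rule divide_right_mono)
    show "\<bar>frac_part x\<bar> * \<bar>real m * ln x ^ (m - 1) - ln x ^ m\<bar> \<le> 1 * (KK m * x powr (1/2))"
      using frac_part_bounds[of x] A by (intro mult_mono) auto
  qed simp
  also have "\<dots> = KK m * (x powr (1/2) / x powr 2)"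
    using x by simp
  also have "x powr (1/2) / x powr 2 = x powr (1/2 - 2)"
    by (rule powr_diff[symmetric])
  also have "(1/2 - 2 :: real) = -3/2" by simp
  finally show ?thesis .
qed

lemma KK_nonneg: "KK m \<ge> 0"
  by (simp add: KK_def)

lemma lemD:
  "gg m integrable_on {1..} \<and> (\<lambda>k. integral {1..real (Suc k)} (gg m)) \<longlonglongrightarrow> integral {1..} (gg m)"
proof -
  define f where "f = (\<lambda>k x. if x \<in> {..real (Suc k)} then gg m x else 0)"
  define h where "h = (\<lambda>x::real. KK m * x powr (-3/2))"
  have seteq: "{..real (Suc k)} \<inter> {1..} = {1..real (Suc k)}" for k by auto
  have fi: "f k integrable_on {1..}" for k
    unfolding f_def integrable_restrict_Int seteq
    using lemB[of "Suc k" m] by (auto simp: integrable_on_def)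
  have hi: "h integrable_on {1..}"
  proof -
    have "(\<lambda>x::real. x powr (-3/2)) integrable_on {1..}"
      using has_integral_powr_to_inf[of "-3/2" 1] by (auto simp: integrable_on_def)
    from integrable_on_cmult_left[OF this, of "KK m"] show ?thesis by (simp add: h_def)
  qed
  have le: "norm (f k x) \<le> h x" if "x \<in> {1..}" for k x
    using that gg_bound[of x m] KK_nonneg[of m] by (auto simp: f_def h_def)
  have conv: "(\<lambda>k. f k x) \<longlonglongrightarrow> gg m x" if "x \<in> {1..}" for x
  proof (rule tendsto_eventually)
    obtain n where n: "x \<le> real n" using real_arch_simple by blast
    show "\<forall>\<^sub>F k in sequentially. f k x = gg m x"
      unfolding eventually_sequentially using n by (intro exI[of _ n]) (auto simp: f_def)
  qed
  note dc = dominated_convergence[OF fi hi le conv]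
  have "integral {1..} (f k) = integral {1..real (Suc k)} (gg m)" for k
    unfolding f_def integral_restrict_Int seteq ..
  with dc show ?thesis by simp
qed

lemma lemE: "stieltjes m = (if m = 0 then 1 else 0) + integral {1..} (gg m)"
proof -
  define S where "S = (\<lambda>N::nat. (\<Sum>k=1..N. ln (real k) ^ m / real k) - ln (real N) ^ (m + 1) / real (m + 1))"
  have eq: "S (Suc k) = (if m = 0 then 1 else 0) + integral {1..real (Suc k)} (gg m)" for k
    using integral_unique[OF lemB[of "Suc k" m]] by (simp add: S_def)
  have "(\<lambda>k. (if m = 0 then 1 else 0) + integral {1..real (Suc k)} (gg m)) \<longlonglongrightarrow> (if m = 0 then 1 else 0) + integral {1..} (gg m)"
    using lemD[of m] by (intro tendsto_add tendsto_const) auto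
  then have "(\<lambda>k. S (Suc k)) \<longlonglongrightarrow> (if m = 0 then 1 else 0) + integral {1..} (gg m)"
    by (simp only: eq)
  then have "S \<longlonglongrightarrow> (if m = 0 then 1 else 0) + integral {1..} (gg m)"
    by (simp only: filterlim_sequentially_Suc)
  then show ?thesis unfolding stieltjes_def S_def[symmetric] by (rule limI)
qed

lemma sign_lemma: "j \<le> m \<Longrightarrow> (-1::real) ^ (m - j) = (-1) ^ m * (-1) ^ j"
proof -
  assume "j \<le> m"
  then have "(-1::real) ^ m = (-1) ^ (m - j) * (-1) ^ j" by (simp flip: power_add)
  then have "(-1::real) ^ m * (-1) ^ j = (-1) ^ (m - j) * ((-1) ^ j * (-1) ^ j)" by simp
  also have "(-1::real) ^ j * (-1) ^ j = 1" by (simp flip: power_add)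
  finally show ?thesis by simp
qed

lemma poly_id:
  fixes u :: real
  shows "(\<Sum>k=1..Suc m. real (m choose (k-1)) * (-1)^(Suc m - k) / fact k * (real k * u^(k-1) - u^k))
         = (-1)^m * laguerre (Suc m) u"
proof -
  define g where "g = (\<lambda>k. real (m choose k) * (-1) ^ k / fact k * u ^ k)"
  define b where "b = (\<lambda>i. real (m choose i) * (-1) ^ Suc i / fact (Suc i) * u ^ Suc i)"
  have L: "laguerre (Suc m) u = (\<Sum>i=0..m. g i) + (\<Sum>i=0..m. b i)"
  proof -
    have "laguerre (Suc m) u = 1 + (\<Sum>i=0..m. real (Suc m choose Suc i) * (-1) ^ Suc i / fact (Suc i) * u ^ Suc i)"
      unfolding laguerre_def by (subst sum.atLeast0_atMost_Suc_shift) simp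
    also have "(\<Sum>i=0..m. real (Suc m choose Suc i) * (-1) ^ Suc i / fact (Suc i) * u ^ Suc i)
       = (\<Sum>i=0..m. b i) + (\<Sum>i=0..m. g (Suc i))"
      unfolding sum.distrib[symmetric]
    proof (rule sum.cong)
      fix i assume "i \<in> {0..m}"
      have e: "real (Suc m choose Suc i) = real (m choose i) + real (m choose Suc i)"
        by (simp add: binomial_Suc_Suc)
      show "real (Suc m choose Suc i) * (-1) ^ Suc i / fact (Suc i) * u ^ Suc i = b i + g (Suc i)"
        unfolding e b_def g_def by (simp only: distrib_right add_divide_distrib)
    qed simp
    also have "(\<Sum>i=0..m. g (Suc i)) = (\<Sum>i=0..m. g i) - 1"
    proof -
      have "(\<Sum>i=0..Suc m. g i) = g 0 + (\<Sum>i=0..m. g (Suc i))" by (simp only: sum.atLeast0_atMost_Suc_shift comp_def)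
      moreover have "(\<Sum>i=0..Suc m. g i) = (\<Sum>i=0..m. g i) + g (Suc m)" by simp
      moreover have "g (Suc m) = 0" "g 0 = 1" by (simp_all add: g_def)
      ultimately show ?thesis by simp
    qed
    finally show ?thesis by simp
  qed
  have A: "(\<Sum>k=1..Suc m. real (m choose (k-1)) * (-1)^(Suc m - k) / fact k * (real k * u^(k-1)))
      = (-1)^m * (\<Sum>i=0..m. g i)"
  proof -
    have "(\<Sum>k=1..Suc m. real (m choose (k-1)) * (-1)^(Suc m - k) / fact k * (real k * u^(k-1)))
      = (\<Sum>i=0..m. real (m choose i) * (-1)^(Suc m - Suc i) / fact (Suc i) * (real (Suc i) * u^i))"
      unfolding One_nat_def sum.shift_bounds_cl_Suc_ivl by simp
    also have "\<dots> = (\<Sum>i=0..m. (-1)^m * g i)"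
    proof (rule sum.cong)
      fix i assume i: "i \<in> {0..m}"
      have f: "real (Suc i) / fact (Suc i) = 1 / (fact i :: real)"
        by (simp only: fact_Suc) (simp del: of_nat_Suc)
      have "real (m choose i) * (-1)^(Suc m - Suc i) / fact (Suc i) * (real (Suc i) * u^i)
          = real (m choose i) * (-1)^(m - i) * (real (Suc i) / fact (Suc i)) * u^i"
        by (simp del: fact_Suc of_nat_Suc)
      also have "\<dots> = (-1)^m * g i" unfolding f g_def using i by (simp add: sign_lemma)
      finally show "real (m choose i) * (-1)^(Suc m - Suc i) / fact (Suc i) * (real (Suc i) * u^i) = (-1)^m * g i" .
    qed simp
    finally show ?thesis by (simp add: sum_distrib_left)
  qed
  have B: "(\<Sum>k=1..Suc m. real (m choose (k-1)) * (-1)^(Suc m - k) / fact k * u^k)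
      = - ((-1)^m * (\<Sum>i=0..m. b i))"
  proof -
    have "(\<Sum>k=1..Suc m. real (m choose (k-1)) * (-1)^(Suc m - k) / fact k * u^k)
      = (\<Sum>i=0..m. real (m choose i) * (-1)^(Suc m - Suc i) / fact (Suc i) * u^(Suc i))"
      unfolding One_nat_def sum.shift_bounds_cl_Suc_ivl by simp
    also have "\<dots> = (\<Sum>i=0..m. - ((-1)^m * b i))"
      by (rule sum.cong) (auto simp: b_def sign_lemma)
    finally show ?thesis by (simp add: sum_distrib_left sum_negf)
  qed
  have "(\<Sum>k=1..Suc m. real (m choose (k-1)) * (-1)^(Suc m - k) / fact k * (real k * u^(k-1) - u^k))
     = (\<Sum>k=1..Suc m. real (m choose (k-1)) * (-1)^(Suc m - k) / fact k * (real k * u^(k-1)))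
       - (\<Sum>k=1..Suc m. real (m choose (k-1)) * (-1)^(Suc m - k) / fact k * u^k)"
    by (simp add: right_diff_distrib sum_subtractf)
  also have "\<dots> = (-1)^m * laguerre (Suc m) u"
    unfolding A B L by (simp add: algebra_simps)
  finally show ?thesis .
qed

lemma integrable_cmult_real: "f integrable_on S \<Longrightarrow> (\<lambda>x. (c::real) * f x) integrable_on S"
  by (rule integrable_on_mult_right)

theorem theorem2p1:
  fixes n :: nat
  shows "(\<lambda>x. frac_part x / x\<^sup>2 * laguerre n (ln x)) integrable_on {1..} \<and>
         ell n = (-1) powi (int n - 1) * integral {1..} (\<lambda>x. frac_part x / x\<^sup>2 * laguerre n (ln x))"
proof (cases n)
  case 0
  have lag: "laguerre 0 u = 1" for u by (simp add: laguerre_def)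
  have fe: "(\<lambda>x. frac_part x / x\<^sup>2 * laguerre n (ln x)) = (\<lambda>x. - gg 0 x)"
    using 0 by (auto simp: lag gg_def)
  have gi: "gg 0 integrable_on {1..}" using lemD[of 0] by simp
  show ?thesis unfolding fe
    using integrable_neg[OF gi] lemE[of 0] 0 by (simp add: ell_def)
next
  case (Suc m)
  define c where "c = (\<lambda>k. real (m choose (k-1)) * (-1)^(Suc m - k) / fact k)"
  have gi: "gg k integrable_on {1..}" for k using lemD[of k] by simp
  have fe: "(\<lambda>x. frac_part x / x\<^sup>2 * laguerre n (ln x)) = (\<lambda>x. (-1)^m * (\<Sum>k=1..Suc m. c k * gg k x))"
  proof
    fix x :: real
    have "(\<Sum>k=1..Suc m. c k * gg k x) = frac_part x / x\<^sup>2 * (\<Sum>k=1..Suc m. c k * (real k * ln x^(k-1) - ln x^k))"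
      unfolding sum_distrib_left by (rule sum.cong) (auto simp: gg_def)
    also have "\<dots> = frac_part x / x\<^sup>2 * ((-1)^m * laguerre (Suc m) (ln x))"
      using poly_id[of m "ln x"] by (simp add: c_def)
    finally have "(-1)^m * (\<Sum>k=1..Suc m. c k * gg k x) = ((-1)^m * (-1)^m) * (frac_part x / x\<^sup>2 * laguerre (Suc m) (ln x))"
      by (simp add: algebra_simps)
    also have "((-1::real)^m * (-1)^m) = 1" by (simp flip: power_add)
    finally show "frac_part x / x\<^sup>2 * laguerre n (ln x) = (-1)^m * (\<Sum>k=1..Suc m. c k * gg k x)"
      using Suc by simp
  qed
  have si: "(\<lambda>x. \<Sum>k=1..Suc m. c k * gg k x) integrable_on {1..}"
    by (intro integrable_sum integrable_cmult_real gi) simp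
  have int: "integral {1..} (\<lambda>x. \<Sum>k=1..Suc m. c k * gg k x) = (\<Sum>k=1..Suc m. c k * integral {1..} (gg k))"
    by (subst integral_sum) (auto intro: integrable_cmult_real gi)
  have ell: "ell n = (\<Sum>k=1..Suc m. c k * integral {1..} (gg k))"
  proof -
    have "ell n = (\<Sum>k=1..Suc m. real (m choose (k-1)) * (-1)^(Suc m - k) / fact k * stieltjes k)"
      using Suc by (simp add: ell_def)
    also have "\<dots> = (\<Sum>k=1..Suc m. c k * integral {1..} (gg k))"
      by (rule sum.cong) (auto simp: lemE c_def)
    finally show ?thesis .
  qed
  have pw: "(-1::real) powi (int n - 1) = (-1)^m" using Suc by simp
  have "((-1::real)^m * (-1)^m) = 1" by (simp flip: power_add)
  then show ?thesis unfolding fe pw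
    using integrable_cmult_real[OF si, of "(-1)^m"] integral_mult[OF si, of "(-1)^m", symmetric] int ell
    by (simp add: mult.assoc[symmetric])
qed

end
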